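(* Consider the setting described in the context, and fix a round index $k\ge 0$ and two distinct UAVs $i\neq j$. Assume that $$\Big\|\Theta^{-1}\big[\hat p_j(hT_c+2T\,|\,(k-1)T)-\hat p_i(hT_c+2T\,|\,(k-1)T)\big]\Big\|_2\ \ge\ \hat r_{\min}\qquad\text{for all } h\in\{0,\dots,h_c\}.$$ Assume moreover that the round-$k$ planned positions of both UAVs satisfy the collision-avoidance constraint (C) of round $k$: UAV $i$'s plan satisfies (C) with respect to $j$, and UAV $j$'s plan satisfies (C) with respect to $i$. This is assumed to hold regardless of whether either trajectory was recomputed at round $k$ or obtained by the reuse rule. Then $$\Big\|\Theta^{-1}\big[\hat p_j(hT_c+T\,|\,kT)-\hat p_i(hT_c+T\,|\,kT)\big]\Big\|_2\ \ge\ \hat r_{\min}\qquad\text{for all } h\in\{0,\dots,h_c\}.$$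
   Context: We consider $N$ UAVs indexed by $i\in\{1,\dots,N\}$, all with linear dynamics $\dot x_i=A_ix_i+B_iu_i$. The state is partitioned as $x_i=(p_i,v_i,y_i)$, where $p_i\in\mathbb R^3$ is the position, $v_i$ is the velocity and $y_i$ collects the remaining state components. $\Theta$ is a fixed invertible $3\times 3$ matrix, and $\hat r_{\min}>0$ is a design constant. Planning takes place in rounds at times $kT$ with $T>0$. At round $k$, each UAV $i$ has a planned state trajectory $\hat x_i(\tau\,|\,kT)$, $\tau\ge T$, with planned position part $\hat p_i(\tau\,|\,kT)$; it describes the absolute time $kT+\tau$. The trajectory planned at round $k$ starts at $\tau=T$. Let $T_c>0$ and $h_c\in\mathbb N$ be such that $T/T_c=h_c/H\in\mathbb N$ for a horizon $H\in\mathbb N$. For $h\in\{0,\dots,h_c\}$ write $$n_{ij}^{h}:=\Theta^{-1}\big[\hat p_j(hT_c+2T\,|\,(k-1)T)-\hat p_i(hT_c+2T\,|\,(k-1)T)\big].$$ The collision-avoidance constraint (C) of round $k$ for UAV $i$ with respect to UAV $j$ requires, for all $h\in\{0,\dots,h_c\}$, $$\frac{(n_{ij}^h)^\top}{\|n_{ij}^h\|_2}\,\Theta^{-1}\big[\hat p_j(hT_c+2T\,|\,(k-1)T)-\hat p_i(hT_c+T\,|\,kT)\big]\ \ge\ \tfrac12\big(\hat r_{\min}+\|n_{ij}^h\|_2\big).$$ The reuse rule (applied when UAV $i$'s trajectory is not recomputed at round $k$) sets $\hat x_i(t\,|\,kT)=\hat x_i(t+T\,|\,(k-1)T)$ and $u_i(t\,|\,kT)=u_i(t+T\,|\,(k-1)T)$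 for all $t\ge T$. *)

theory Defs
  imports "HOL-Analysis.Analysis"
begin

text \<open>Planned positions: phat i r tau = planned position of UAV i at round r
  (describing absolute time r*T + tau). Rounds are integers so that round k-1 = -1 makes sense.\<close>

definition nvec :: "real^3^3 \<Rightarrow> (nat \<Rightarrow> int \<Rightarrow> real \<Rightarrow> real^3) \<Rightarrow> real \<Rightarrow> real \<Rightarrow> int \<Rightarrow> nat \<Rightarrow> nat \<Rightarrow> nat \<Rightarrow> real^3" where
  "nvec \<Theta> phat T Tc k i j h =
     matrix_inv \<Theta> *v (phat j (k - 1) (real h * Tc + 2 * T) - phat i (k - 1) (real h * Tc + 2 * T))"

definition ca_constraint ::
  "real^3^3 \<Rightarrow> real \<Rightarrow> (nat \<Rightarrow> int \<Rightarrow> real \<Rightarrow> real^3) \<Rightarrow> real \<Rightarrow> real \<Rightarrow> nat \<Rightarrow> int \<Rightarrow> nat \<Rightarrow> nat \<Rightarrow> bool" where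
  "ca_constraint \<Theta> rmin phat T Tc hc k i j \<longleftrightarrow>
     (\<forall>h \<in> {0..hc}.
        (nvec \<Theta> phat T Tc k i j h /\<^sub>R norm (nvec \<Theta> phat T Tc k i j h)) \<bullet>
          (matrix_inv \<Theta> *v (phat j (k - 1) (real h * Tc + 2 * T) - phat i k (real h * Tc + T)))
        \<ge> (rmin + norm (nvec \<Theta> phat T Tc k i j h)) / 2)"

end

theory Submission
  imports Defs
begin

lemma ar_aux: "(x::real) + y = n + z \<Longrightarrow> (r + n) / 2 \<le> x \<Longrightarrow> (r + n) / 2 \<le> y \<Longrightarrow> r \<le> z"
  by (simp add: field_simps)

theorem lemma1:
  fixes \<Theta> :: "real^3^3" and rmin T Tc :: real and hc H N i j :: nat and k :: int
    and phat :: "nat \<Rightarrow> int \<Rightarrow> real \<Rightarrow> real^3"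
  assumes "invertible \<Theta>" and "rmin > 0" and "T > 0" and "Tc > 0" and "H > 0"
    and "T / Tc = real hc / real H" and "T / Tc \<in> \<nat>"
    and "k \<ge> 0" and "i \<in> {1..N}" and "j \<in> {1..N}" and "i \<noteq> j"
    and "\<forall>h \<in> {0..hc}. norm (nvec \<Theta> phat T Tc k i j h) \<ge> rmin"
    and "ca_constraint \<Theta> rmin phat T Tc hc k i j"
    and "ca_constraint \<Theta> rmin phat T Tc hc k j i"
  shows "\<forall>h \<in> {0..hc}.
     norm (matrix_inv \<Theta> *v (phat j k (real h * Tc + T) - phat i k (real h * Tc + T))) \<ge> rmin"
proof
  fix h assume h: "h \<in> {0..hc}"
  define M where "M = matrix_inv \<Theta>"
  define qi0 where "qi0 = phat i (k - 1) (real h * Tc + 2 * T)"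
  define qj0 where "qj0 = phat j (k - 1) (real h * Tc + 2 * T)"
  define qi where "qi = phat i k (real h * Tc + T)"
  define qj where "qj = phat j k (real h * Tc + T)"
  define a where "a = M *v (qj0 - qi0)"
  define u where "u = a /\<^sub>R norm a"
  have na: "norm a \<ge> rmin" using assms(12) h unfolding a_def M_def qj0_def qi0_def nvec_def by auto
  hence a0: "norm a > 0" using assms(2) by linarith
  have nji: "nvec \<Theta> phat T Tc k j i h = - a"
    unfolding nvec_def a_def M_def qj0_def qi0_def
    by (metis minus_diff_eq matrix_vector_mult_diff_distrib)
  have c1: "u \<bullet> (M *v (qj0 - qi)) \<ge> (rmin + norm a) / 2"
  proof -
    have "(nvec \<Theta> phat T Tc k i j h /\<^sub>R norm (nvec \<Theta> phat T Tc k i j h)) \<bullet>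
          (matrix_inv \<Theta> *v (phat j (k - 1) (real h * Tc + 2 * T) - phat i k (real h * Tc + T)))
        \<ge> (rmin + norm (nvec \<Theta> phat T Tc k i j h)) / 2"
      using assms(13) h unfolding ca_constraint_def by blast
    moreover have "nvec \<Theta> phat T Tc k i j h = a"
      unfolding nvec_def a_def M_def qj0_def qi0_def ..
    ultimately show ?thesis unfolding u_def by (simp only: M_def qj0_def qi_def)
  qed
  have c2': "((- a) /\<^sub>R norm (- a)) \<bullet> (M *v (qi0 - qj)) \<ge> (rmin + norm (- a)) / 2"
  proof -
    have "(nvec \<Theta> phat T Tc k j i h /\<^sub>R norm (nvec \<Theta> phat T Tc k j i h)) \<bullet>
          (matrix_inv \<Theta> *v (phat i (k - 1) (real h * Tc + 2 * T) - phat j k (real h * Tc + T)))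
        \<ge> (rmin + norm (nvec \<Theta> phat T Tc k j i h)) / 2"
      using assms(14) h unfolding ca_constraint_def by blast
    thus ?thesis unfolding nji by (simp only: M_def qj_def qi0_def)
  qed
  have e2a: "(- a) /\<^sub>R norm (- a) = - u" unfolding u_def by simp
  have e2b: "M *v (qi0 - qj) = - (M *v (qj - qi0))"
    by (simp add: matrix_vector_mult_diff_distrib)
  have e2: "((- a) /\<^sub>R norm (- a)) \<bullet> (M *v (qi0 - qj)) = u \<bullet> (M *v (qj - qi0))"
    unfolding e2a e2b by simp
  have c2: "u \<bullet> (M *v (qj - qi0)) \<ge> (rmin + norm a) / 2" using c2' e2 by simp
  have sum: "M *v (qj0 - qi) + M *v (qj - qi0) = a + M *v (qj - qi)"
    unfolding a_def by (simp add: matrix_vector_mult_diff_distrib algebra_simps)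
  have ua: "u \<bullet> a = norm a" using a0 unfolding u_def
    by (simp add: dot_square_norm power2_eq_square)
  have "u \<bullet> (M *v (qj0 - qi)) + u \<bullet> (M *v (qj - qi0)) = norm a + u \<bullet> (M *v (qj - qi))"
    using sum ua by (metis inner_add_right)
  hence key: "u \<bullet> (M *v (qj - qi)) \<ge> rmin" using c1 c2 ar_aux by blast
  have nu: "norm u = 1" using a0 unfolding u_def by simp
  have "u \<bullet> (M *v (qj - qi)) \<le> norm (M *v (qj - qi))"
    using norm_cauchy_schwarz[of u "M *v (qj - qi)"] nu by simp
  thus "norm (matrix_inv \<Theta> *v (phat j k (real h * Tc + T) - phat i k (real h * Tc + T))) \<ge> rmin"
    using key unfolding M_def qj_def qi_def by linarith
qed

end
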